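(* Let $T>0$ and let $(\Omega,(\mathcal{F}_t)_{t\in[0,T]},P)$ be a filtered probability space satisfying the usual conditions, with $\mathcal{F}_0$ trivial. Let $\mathcal{O}\subset\mathbb{R}^n$ be open and let $S=(S(t))_{t\in[0,T]}$ be a continuous adapted process with values in $\mathcal{O}$ having conditional full support in $\mathcal{O}$. Let $\tau$ be a stopping time and let $Q_{S|\mathcal{F}_\tau}$ denote a regular version of the conditional distribution of $S$ (as a $C([0,T],\mathcal{O})$-valued random element) given $\mathcal{F}_\tau$. Then almost surely \[ \operatorname{supp}Q_{S|\mathcal{F}_\tau}=\{g\in C([0,T],\mathcal{O}):\ g|_{[0,\tau]}=S|_{[0,\tau]}\}. \]
   Context: $C([0,T],\mathcal{O})$ carries the topology of uniform convergence. Conditional full support: $S$ has conditional full support in $\mathcal{O}$ if for all $t\in[0,T]$ and every open set $G\subset C([0,T],\mathcal{O})$, $P(S\in G\mid\mathcal{F}_t)>0$ almost surely on the event $\{S|_{[0,t]}\in\{g|_{[0,t]}: g\in G\}\}$. *)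

theory Defs
  imports "HOL-Analysis.Analysis" "HOL-Probability.Probability"
begin

text \<open>The path space C([0,T],Dom) with the topology of uniform convergence:
  continuous maps [0,T] -> Dom (extensional outside [0,T]) with the sup metric.\<close>
definition path_space :: "real \<Rightarrow> 'b::metric_space set \<Rightarrow> (real \<Rightarrow> 'b) metric" where
  "path_space T Dom = cfunspace (top_of_set {0..T}) (submetric euclidean_metric Dom)"

definition borel_of_top :: "'p topology \<Rightarrow> 'p measure" where
  "borel_of_top X = sigma (topspace X) {U. openin X U}"

definition path_of :: "real \<Rightarrow> (real \<Rightarrow> 'a \<Rightarrow> 'b) \<Rightarrow> 'a \<Rightarrow> (real \<Rightarrow> 'b)" where
  "path_of T S \<omega> = restrict (\<lambda>t. S t \<omega>) {0..T}"

definition supp_of :: "'p topology \<Rightarrow> 'p measure \<Rightarrow> 'p set" where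
  "supp_of X \<mu> = {g \<in> topspace X. \<forall>U. openin X U \<and> g \<in> U \<longrightarrow> emeasure \<mu> U > 0}"

definition usual_conditions :: "'a measure \<Rightarrow> (real \<Rightarrow> 'a measure) \<Rightarrow> real \<Rightarrow> bool" where
  "usual_conditions M F T \<longleftrightarrow>
     (\<forall>N A. A \<in> sets M \<and> emeasure M A = 0 \<and> N \<subseteq> A \<longrightarrow> N \<in> sets (F 0)) \<and>
     (\<forall>t\<in>{0..<T}. sets (F t) = (\<Inter>s\<in>{t<..T}. sets (F s)))"

definition cond_full_support ::
    "'a measure \<Rightarrow> (real \<Rightarrow> 'a measure) \<Rightarrow> real \<Rightarrow> 'b::metric_space set \<Rightarrow> (real \<Rightarrow> 'a \<Rightarrow> 'b) \<Rightarrow> bool" where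
  "cond_full_support M F T Dom S \<longleftrightarrow>
     (\<forall>t\<in>{0..T}. \<forall>G. openin (mtopology_of (path_space T Dom)) G \<longrightarrow>
        (AE \<omega> in M. (\<exists>g\<in>G. \<forall>s\<in>{0..t}. g s = S s \<omega>) \<longrightarrow>
           real_cond_exp M (F t) (indicator {\<omega>\<in>space M. path_of T S \<omega> \<in> G}) \<omega> > 0))"

definition regular_cond_dist ::
    "'a measure \<Rightarrow> 'a measure \<Rightarrow> ('a \<Rightarrow> 'p) \<Rightarrow> 'p measure \<Rightarrow> ('a \<Rightarrow> 'p measure) \<Rightarrow> bool" where
  "regular_cond_dist M G X N Q \<longleftrightarrow>
     (\<forall>\<omega>\<in>space M. prob_space (Q \<omega>) \<and> sets (Q \<omega>) = sets N) \<and>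
     (\<forall>B\<in>sets N. (\<lambda>\<omega>. measure (Q \<omega>) B) \<in> borel_measurable G \<and>
        (AE \<omega> in M. measure (Q \<omega>) B = real_cond_exp M G (indicator (X -` B \<inter> space M)) \<omega>))"

end

theory Submission
  imports Defs
begin

lemma dist_tri3: "dist a d \<le> dist a b + dist b c + dist c d"
  using dist_triangle[of a d c] dist_triangle[of a c b] by linarith

lemma dist_tri4: "dist a e \<le> dist a b + dist b c + dist c d + dist d e"
  using dist_tri3[of a d b c] dist_triangle[of a e d] by linarith

lemma mtop_sub_eucl: "mtopology_of (submetric euclidean_metric Dom) = top_of_set Dom"
  by (simp add: mtopology_of_submetric)

lemma mspace_path:
  assumes "0 \<le> T"
  shows "mspace (path_space T Dom) = {g. (\<forall>t\<in>{0..T}. g t \<in> Dom) \<and> g \<in> extensional {0..T} \<and> continuous_on {0..T} g}"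
proof -
  have c: "compactin (top_of_set {0..T}) (topspace (top_of_set {0..T}))"
    by (simp add: compactin_subtopology)
  show ?thesis unfolding path_space_def compactin_mspace_cfunspace[OF c]
    by (auto simp: mtop_sub_eucl continuous_map_in_subtopology)
qed

lemma topspace_path: "topspace (mtopology_of (path_space T Dom)) = mspace (path_space T Dom)"
  by simp

lemma mdist_path_le:
  assumes "g \<in> mspace (path_space T Dom)" "h \<in> mspace (path_space T Dom)" "0 \<le> B"
   "\<And>t. t \<in> {0..T} \<Longrightarrow> dist (g t) (h t) \<le> B"
  shows "mdist (path_space T Dom) g h \<le> B"
  unfolding path_space_def using assms by (intro mdist_cfunspace_le) auto

lemma mdist_path_ge:
  assumes "g \<in> mspace (path_space T Dom)" "h \<in> mspace (path_space T Dom)" "t \<in> {0..T}"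
  shows "dist (g t) (h t) \<le> mdist (path_space T Dom) g h"
  using mdist_cfunspace_imp_mdist_le[of g "top_of_set {0..T}" "submetric euclidean_metric Dom" h
      "mdist (path_space T Dom) g h" t] assms unfolding path_space_def by auto

lemma openin_path:
  "openin (mtopology_of (path_space T Dom)) U \<longleftrightarrow> U \<subseteq> mspace (path_space T Dom) \<and>
     (\<forall>x\<in>U. \<exists>r>0. \<forall>y\<in>mspace (path_space T Dom). mdist (path_space T Dom) x y < r \<longrightarrow> y \<in> U)"
proof -
  interpret Metric_space "mspace (path_space T Dom)" "mdist (path_space T Dom)"
    by (rule Metric_space_mspace_mdist)
  have eq: "mball x r \<subseteq> U \<longleftrightarrow> (\<forall>y\<in>mspace (path_space T Dom). mdist (path_space T Dom) x y < r \<longrightarrow> y \<in> U)"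
    if "x \<in> mspace (path_space T Dom)" for x r
    using that unfolding mball_def by blast
  have A: "(U \<subseteq> mspace (path_space T Dom) \<and> (\<forall>x\<in>U. \<exists>r>0. mball x r \<subseteq> U)) \<longleftrightarrow>
     (U \<subseteq> mspace (path_space T Dom) \<and>
     (\<forall>x\<in>U. \<exists>r>0. \<forall>y\<in>mspace (path_space T Dom). mdist (path_space T Dom) x y < r \<longrightarrow> y \<in> U))"
  proof (cases "U \<subseteq> mspace (path_space T Dom)")
    case True
    have "(\<exists>r>0. mball x r \<subseteq> U) \<longleftrightarrow> (\<exists>r>0. \<forall>y\<in>mspace (path_space T Dom). mdist (path_space T Dom) x y < r \<longrightarrow> y \<in> U)"
      if "x \<in> U" for x
      using eq[of x] that True by blast
    then show ?thesis using True by blast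
  qed simp
  show ?thesis unfolding mtopology_of_def openin_mtopology using A by (simp only: Ball_def)
qed


definition Vset :: "real \<Rightarrow> 'b::metric_space set \<Rightarrow> real \<Rightarrow> 'b \<Rightarrow> real \<Rightarrow> (real \<Rightarrow> 'b) set" where
  "Vset T Dom q c e = {h \<in> mspace (path_space T Dom). q \<in> {0..T} \<and> dist (h q) c < e}"

lemma Vset_open: "openin (mtopology_of (path_space T Dom)) (Vset T Dom q c e)"
  unfolding openin_path
proof (intro conjI ballI)
  show "Vset T Dom q c e \<subseteq> mspace (path_space T Dom)" by (auto simp: Vset_def)
  fix h assume h: "h \<in> Vset T Dom q c e"
  show "\<exists>r>0. \<forall>y\<in>mspace (path_space T Dom). mdist (path_space T Dom) h y < r \<longrightarrow> y \<in> Vset T Dom q c e"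
  proof (intro exI[of _ "e - dist (h q) c"] conjI ballI impI)
    show "0 < e - dist (h q) c" using h by (auto simp: Vset_def)
    fix y assume y: "y \<in> mspace (path_space T Dom)" "mdist (path_space T Dom) h y < e - dist (h q) c"
    have "dist (h q) (y q) \<le> mdist (path_space T Dom) h y"
      using h y by (intro mdist_path_ge) (auto simp: Vset_def)
    moreover have "dist (y q) c \<le> dist (h q) (y q) + dist (h q) c"
      by (metis dist_commute dist_triangle)
    ultimately show "y \<in> Vset T Dom q c e" using h y by (auto simp: Vset_def)
  qed
qed

definition Wset :: "real \<Rightarrow> 'b::metric_space set \<Rightarrow> nat \<Rightarrow> 'b list \<Rightarrow> real \<Rightarrow> (real \<Rightarrow> 'b) set" where
  "Wset T Dom N cs e = {h \<in> mspace (path_space T Dom). \<exists>\<delta>>0.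
     (\<forall>i\<le>N. dist (h (real i * T / real N)) (cs!i) \<le> e - \<delta>) \<and>
     (\<forall>s\<in>{0..T}. \<forall>u\<in>{0..T}. \<bar>s - u\<bar> \<le> T / real N \<longrightarrow> dist (h s) (h u) \<le> e - \<delta>)}"

lemma grid_in: "0 \<le> T \<Longrightarrow> i \<le> N \<Longrightarrow> real i * T / real N \<in> {0..T}"
proof (cases "N = 0")
  case False
  assume "0 \<le> T" "i \<le> N"
  then have "real i * T \<le> real N * T" by (intro mult_right_mono) auto
  then show ?thesis using False \<open>0 \<le> T\<close> by (auto simp: divide_simps mult.commute)
qed auto

lemma Wset_open:
  assumes "0 \<le> T"
  shows "openin (mtopology_of (path_space T Dom)) (Wset T Dom N cs e)"
  unfolding openin_path
proof (intro conjI ballI)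
  show "Wset T Dom N cs e \<subseteq> mspace (path_space T Dom)" by (auto simp: Wset_def)
  fix h assume h: "h \<in> Wset T Dom N cs e"
  then obtain \<delta> where d: "\<delta> > 0" and h1: "\<forall>i\<le>N. dist (h (real i * T / real N)) (cs!i) \<le> e - \<delta>"
    and h2: "\<forall>s\<in>{0..T}. \<forall>u\<in>{0..T}. \<bar>s - u\<bar> \<le> T / real N \<longrightarrow> dist (h s) (h u) \<le> e - \<delta>"
    and hm: "h \<in> mspace (path_space T Dom)"
    by (auto simp: Wset_def)
  show "\<exists>r>0. \<forall>y\<in>mspace (path_space T Dom). mdist (path_space T Dom) h y < r \<longrightarrow> y \<in> Wset T Dom N cs e"
  proof (intro exI[of _ "\<delta>/4"] conjI ballI impI)
    show "0 < \<delta>/4" using d by simp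
    fix y assume y: "y \<in> mspace (path_space T Dom)" "mdist (path_space T Dom) h y < \<delta>/4"
    have yh: "dist (y t) (h t) < \<delta>/4" if "t \<in> {0..T}" for t
      using mdist_path_ge[OF hm y(1) that] y(2) by (simp add: dist_commute)
    have "\<forall>i\<le>N. dist (y (real i * T / real N)) (cs!i) \<le> e - \<delta>/2"
    proof (intro allI impI)
      fix i assume i: "i \<le> N"
      have "dist (y (real i * T / real N)) (cs!i) \<le> dist (y (real i * T / real N)) (h (real i * T / real N)) + dist (h (real i * T / real N)) (cs!i)"
        by (rule dist_triangle)
      then show "dist (y (real i * T / real N)) (cs!i) \<le> e - \<delta>/2"
        using yh[OF grid_in[OF assms i]] h1[rule_format, OF i] d by linarith
    qed
    moreover have "\<forall>s\<in>{0..T}. \<forall>u\<in>{0..T}. \<bar>s - u\<bar> \<le> T / real N \<longrightarrow> dist (y s) (y u) \<le> e - \<delta>/2"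
    proof (intro ballI impI)
      fix s u assume su: "s \<in> {0..T}" "u \<in> {0..T}" "\<bar>s - u\<bar> \<le> T / real N"
      have "dist (y s) (y u) \<le> dist (y s) (h s) + dist (h s) (h u) + dist (h u) (y u)"
        by (rule dist_tri3)
      moreover have "dist (h u) (y u) < \<delta>/4" using yh[OF su(2)] by (simp add: dist_commute)
      ultimately show "dist (y s) (y u) \<le> e - \<delta>/2" using yh[OF su(1)] h2 su by fastforce
    qed
    ultimately show "y \<in> Wset T Dom N cs e" using y d unfolding Wset_def
      by (intro CollectI conjI exI[of _ "\<delta>/2"]) auto
  qed
qed

lemma grid_near:
  assumes "0 < T" "0 < N" "s \<in> {0..T}"
  shows "\<exists>i\<le>N. \<bar>s - real i * T / real N\<bar> \<le> T / real N"
proof -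
  define x where "x = s * real N / T"
  have x0: "0 \<le> x" using assms by (auto simp: x_def)
  have xN: "x \<le> real N" using assms by (auto simp: x_def field_simps mult_right_mono)
  define i where "i = nat \<lfloor>x\<rfloor>"
  have i1: "real i \<le> x" and i2: "x < real i + 1" using x0 by (auto simp: i_def)
  have fl: "\<lfloor>x\<rfloor> \<le> int N" using xN by (simp add: floor_le_iff)
  have iN: "i \<le> N" using fl by (simp add: i_def)
  have eq: "s - real i * T / real N = (x - real i) * (T / real N)"
    using assms by (simp add: x_def field_simps)
  have "\<bar>s - real i * T / real N\<bar> = (x - real i) * (T / real N)"
    unfolding eq using i1 assms by (simp add: abs_mult)
  also have "\<dots> \<le> 1 * (T / real N)"
    using i1 i2 assms by (intro mult_right_mono) auto
  finally show ?thesis using iN by auto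
qed

lemma W_dense:
  fixes D :: "'b::metric_space set"
  assumes T: "0 < T" and g: "g \<in> mspace (path_space T Dom)" and rho: "0 < \<rho>"
    and D: "\<And>x e. 0 < e \<Longrightarrow> \<exists>d\<in>D. dist x d < e"
  shows "\<exists>N cs k. cs \<in> lists D \<and> g \<in> Wset T Dom N cs (1 / real (Suc k)) \<and>
     (\<forall>h\<in>Wset T Dom N cs (1 / real (Suc k)). mdist (path_space T Dom) g h < \<rho>)"
proof -
  obtain k :: nat where k: "inverse (real (Suc k)) < \<rho> / 4"
    using reals_Archimedean rho by (metis zero_less_divide_iff zero_less_numeral)
  define e where "e = 1 / real (Suc k)"
  have e0: "0 < e" by (simp add: e_def)
  have e\<rho>: "4 * e < \<rho>" using k by (simp add: e_def field_simps)
  have gm: "\<forall>t\<in>{0..T}. g t \<in> Dom" "continuous_on {0..T} g"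
    using g mspace_path[of T Dom] T by auto
  have "uniformly_continuous_on {0..T} g"
    by (rule compact_uniformly_continuous) (use gm in auto)
  then obtain d where d: "d > 0" "\<forall>x\<in>{0..T}. \<forall>x'\<in>{0..T}. dist x' x < d \<longrightarrow> dist (g x') (g x) < e/2"
    unfolding uniformly_continuous_on_def using e0 by (meson half_gt_zero)
  obtain N :: nat where N: "T / d < real N" using reals_Archimedean2 by blast
  have N0: "0 < N" using N T d by (metis divide_pos_pos of_nat_0_less_iff order.strict_trans)
  have Nd: "T / real N < d" using N T d N0 by (simp add: field_simps)
  define cs where "cs = map (\<lambda>i. SOME c. c \<in> D \<and> dist (g (real i * T / real N)) c < e/2) [0..<Suc N]"
  have cs_prop: "cs!i \<in> D \<and> dist (g (real i * T / real N)) (cs!i) < e/2" if "i \<le> N" for i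
  proof -
    have "\<exists>c. c \<in> D \<and> dist (g (real i * T / real N)) c < e/2" using D e0 by (meson half_gt_zero)
    then have "(SOME c. c \<in> D \<and> dist (g (real i * T / real N)) c < e/2) \<in> D \<and>
        dist (g (real i * T / real N)) (SOME c. c \<in> D \<and> dist (g (real i * T / real N)) c < e/2) < e/2"
      by (rule someI_ex)
    moreover have "cs!i = (SOME c. c \<in> D \<and> dist (g (real i * T / real N)) c < e/2)"
      using that unfolding cs_def by (simp del: upt_Suc)
    ultimately show ?thesis by simp
  qed
  have csD: "cs \<in> lists D"
  proof -
    have "set cs \<subseteq> D"
    proof
      fix c assume "c \<in> set cs"
      then obtain i where "i < length cs" "c = cs!i" by (metis in_set_conv_nth)
      then show "c \<in> D" using cs_prop[of i] by (simp add: cs_def)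
    qed
    then show ?thesis by auto
  qed
  have gW: "g \<in> Wset T Dom N cs e"
    unfolding Wset_def
  proof (intro CollectI conjI exI[of _ "e/2"] allI impI ballI)
    show "g \<in> mspace (path_space T Dom)" by (rule g)
    show "0 < e/2" using e0 by simp
    fix i assume "i \<le> N"
    then show "dist (g (real i * T / real N)) (cs!i) \<le> e - e/2" using cs_prop[of i] by simp
  next
    fix s u assume su: "s \<in> {0..T}" "u \<in> {0..T}" "\<bar>s - u\<bar> \<le> T / real N"
    then have "dist s u < d" using Nd by (simp add: dist_real_def)
    then have "dist (g s) (g u) < e/2" using d(2)[rule_format, of u s] su(1,2) by blast
    then show "dist (g s) (g u) \<le> e - e/2" by simp
  qed
  have close: "mdist (path_space T Dom) g h < \<rho>" if h: "h \<in> Wset T Dom N cs e" for h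
  proof -
    obtain \<delta> where dl: "\<delta> > 0" and h1: "\<forall>i\<le>N. dist (h (real i * T / real N)) (cs!i) \<le> e - \<delta>"
      and h2: "\<forall>s\<in>{0..T}. \<forall>u\<in>{0..T}. \<bar>s - u\<bar> \<le> T / real N \<longrightarrow> dist (h s) (h u) \<le> e - \<delta>"
      and hm: "h \<in> mspace (path_space T Dom)"
      using h by (auto simp: Wset_def)
    have "mdist (path_space T Dom) g h \<le> 4 * e"
    proof (rule mdist_path_le[OF g hm])
      show "0 \<le> 4 * e" using e0 by simp
      fix s assume s: "s \<in> {0..T}"
      obtain i where i: "i \<le> N" "\<bar>s - real i * T / real N\<bar> \<le> T / real N"
        using grid_near[OF T N0 s] by blast
      define ti where "ti = real i * T / real N"
      have ti: "ti \<in> {0..T}" using grid_in[of T i N] T i by (simp add: ti_def)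
      have i2': "\<bar>s - ti\<bar> \<le> T / real N" using i(2) by (simp add: ti_def)
      have a0: "dist (h s) (h ti) \<le> e - \<delta>" using h2 s ti i2' by blast
      have a: "dist (h s) (h ti) \<le> e" using a0 dl by linarith
      have b0: "dist (h ti) (cs!i) \<le> e - \<delta>" using h1 i(1) by (simp add: ti_def)
      have b: "dist (h ti) (cs!i) \<le> e" using b0 dl by linarith
      have c: "dist (g ti) (cs!i) < e/2" using cs_prop[OF i(1)] unfolding ti_def by simp
      have "dist s ti < d" using i Nd by (simp add: dist_real_def ti_def)
      then have dd: "dist (g s) (g ti) < e/2" using d(2)[rule_format, OF ti s] by blast
      have "dist (g s) (h s) \<le> dist (g s) (g ti) + dist (g ti) (cs!i) + dist (cs!i) (h ti) + dist (h ti) (h s)"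
        by (rule dist_tri4)
      moreover have "dist (cs!i) (h ti) = dist (h ti) (cs!i)" "dist (h ti) (h s) = dist (h s) (h ti)"
        by (simp_all add: dist_commute)
      ultimately show "dist (g s) (h s) \<le> 4 * e" using a b c dd e0 by linarith
    qed
    then show ?thesis using e\<rho> by linarith
  qed
  show ?thesis using csD gW close unfolding e_def by blast
qed

lemma extend_path:
  fixes Dom :: "'b::euclidean_space set" and x :: "real \<Rightarrow> 'b"
  assumes T: "0 < T" and Dom: "open Dom"
    and Sc: "continuous_on {0..T} x" and Sd: "\<forall>t\<in>{0..T}. x t \<in> Dom"
    and tau: "\<tau> \<in> {0..T}" and g: "g \<in> mspace (path_space T Dom)"
    and agree: "\<forall>s\<in>{0..\<tau>}. g s = x s" and rho: "0 < \<rho>"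
  shows "\<exists>t \<in> (\<rat> \<inter> {0..T}) \<union> {T}. \<tau> \<le> t \<and>
     (\<exists>h\<in>mspace (path_space T Dom). mdist (path_space T Dom) g h < \<rho> \<and> (\<forall>s\<in>{0..t}. h s = x s))"
proof (cases "\<tau> = T")
  case True
  have "mdist (path_space T Dom) g g \<le> 0" by (rule mdist_path_le[OF g g]) auto
  then have "\<exists>h\<in>mspace (path_space T Dom). mdist (path_space T Dom) g h < \<rho> \<and> (\<forall>s\<in>{0..T}. h s = x s)"
    using agree True g rho by (intro bexI[of _ g]) auto
  then show ?thesis using True by auto
next
  case False
  then have tT: "\<tau> < T" using tau by auto
  have gm: "\<forall>t\<in>{0..T}. g t \<in> Dom" "continuous_on {0..T} g"
    using g mspace_path[of T Dom] T by auto
  have K: "compact (g ` {0..T})" by (rule compact_continuous_image) (use gm in auto)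
  obtain \<delta> where dl: "\<delta> > 0" and dl2: "\<forall>a\<in>g ` {0..T}. \<forall>b\<in>-Dom. \<delta> \<le> dist a b"
    using separate_compact_closed[OF K, of "-Dom"] Dom gm by auto
  define \<eta> where "\<eta> = min \<rho> \<delta> / 2"
  have eta: "0 < \<eta>" "\<eta> < \<rho>" "\<eta> < \<delta>" using dl rho by (auto simp: \<eta>_def)
  have "continuous_on {0..T} (\<lambda>u. x u - g u)" using Sc gm by (intro continuous_on_diff) auto
  then obtain \<theta> where th: "\<theta> > 0" "\<forall>u\<in>{0..T}. dist u \<tau> < \<theta> \<longrightarrow> dist (x u - g u) (x \<tau> - g \<tau>) < \<eta>"
    using tau eta unfolding continuous_on_iff by blast
  have th2: "norm (x u - g u) < \<eta>" if "u \<in> {0..T}" "dist u \<tau> < \<theta>" for u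
    using th(2) that agree tau by (auto simp: dist_norm)
  obtain t where t: "t \<in> \<rat>" "\<tau> < t" "t < min (\<tau> + \<theta>) T"
    using Rats_dense_in_real[of \<tau> "min (\<tau> + \<theta>) T"] tT th by auto
  have tin: "t \<in> {0..T}" using t tau by auto
  define h where "h = restrict (\<lambda>s. g s + (x (min s t) - g (min s t))) {0..T}"
  have small: "norm (x (min s t) - g (min s t)) \<le> \<eta>" if "s \<in> {0..T}" for s
  proof (cases "min s t \<le> \<tau>")
    case True
    then have "min s t \<in> {0..\<tau>}" using that tin by auto
    then have "g (min s t) = x (min s t)" using agree by blast
    then show ?thesis using eta by simp
  next
    case False
    then have "dist (min s t) \<tau> < \<theta>" using t that by (auto simp: dist_real_def)
    moreover have "min s t \<in> {0..T}" using that tin by auto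
    ultimately show ?thesis using th2[of "min s t"] by simp
  qed
  have hdom: "h s \<in> Dom" if s: "s \<in> {0..T}" for s
  proof (cases "s \<le> t")
    case True
    then show ?thesis using s Sd by (simp add: h_def)
  next
    case False
    have hs: "h s = g s + (x t - g t)" using s False by (simp add: h_def)
    show ?thesis
    proof (rule ccontr)
      assume "h s \<notin> Dom"
      then have "\<delta> \<le> dist (g s) (h s)" using dl2 s by auto
      also have "dist (g s) (h s) = norm (x t - g t)" by (simp add: hs dist_norm norm_minus_commute)
      also have "\<dots> \<le> \<eta>" using small[OF s] False by simp
      finally show False using eta by simp
    qed
  qed
  have hcont: "continuous_on {0..T} h"
  proof -
    have m: "continuous_on {0..T} (\<lambda>s. min s t)" by (intro continuous_intros)
    have mi: "(\<lambda>s. min s t) ` {0..T} \<subseteq> {0..T}" using tin by auto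
    have "continuous_on {0..T} (\<lambda>s. g s + (x (min s t) - g (min s t)))"
    proof -
      have c1: "continuous_on {0..T} (\<lambda>s. x (min s t))" by (rule continuous_on_compose2[OF Sc m mi])
      have c2: "continuous_on {0..T} (\<lambda>s. g (min s t))" by (rule continuous_on_compose2[OF gm(2) m mi])
      show ?thesis by (intro continuous_on_add continuous_on_diff gm(2) c1 c2)
    qed
    then show ?thesis by (rule continuous_on_eq) (simp add: h_def)
  qed
  have hm: "h \<in> mspace (path_space T Dom)"
    using hdom hcont T by (auto simp: mspace_path h_def)
  have "mdist (path_space T Dom) g h \<le> \<eta>"
  proof (rule mdist_path_le[OF g hm])
    show "0 \<le> \<eta>" using eta by simp
    fix s assume s: "s \<in> {0..T}"
    have "dist (g s) (h s) = norm (x (min s t) - g (min s t))" using s by (simp add: h_def dist_norm norm_minus_commute)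
    then show "dist (g s) (h s) \<le> \<eta>" using small[OF s] by simp
  qed
  moreover have "\<forall>s\<in>{0..t}. h s = x s" using tin by (auto simp: h_def)
  ultimately have "\<exists>h\<in>mspace (path_space T Dom). mdist (path_space T Dom) g h < \<rho> \<and> (\<forall>s\<in>{0..t}. h s = x s)"
    using eta hm by (intro bexI[of _ h]) auto
  then show ?thesis using t tin by (intro bexI[of _ t]) auto
qed

lemma separate_point:
  fixes D :: "'b::metric_space set" and x :: "real \<Rightarrow> 'b"
  assumes cx: "continuous_on {0..T} x" and g: "g \<in> mspace (path_space T Dom)" and T: "0 \<le> T"
   and tau: "\<tau> \<le> T" and s: "s \<in> {0..\<tau>}" and ne: "g s \<noteq> x s"
   and D: "\<And>y e. 0 < e \<Longrightarrow> \<exists>d\<in>D. dist y d < e"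
  shows "\<exists>q\<in>\<rat>. \<exists>c\<in>D. \<exists>k::nat. q \<in> {0..T} \<and> (q = 0 \<or> q < \<tau>) \<and>
     2 / real (Suc k) \<le> dist (x q) c \<and> dist (g q) c < 1 / real (Suc k)"
proof -
  have gm: "continuous_on {0..T} g" using g mspace_path[of T Dom] T by auto
  have "\<exists>q\<in>\<rat>. q \<in> {0..T} \<and> (q = 0 \<or> q < \<tau>) \<and> g q \<noteq> x q"
  proof (cases "s = 0")
    case True then show ?thesis using ne s tau by (intro bexI[of _ 0]) auto
  next
    case False
    then have s0: "0 < s" using s by auto
    have "continuous_on {0..T} (\<lambda>u. dist (g u) (x u))" using gm cx by (intro continuous_intros)
    moreover have sT: "s \<in> {0..T}" using s tau by auto
    moreover have "0 < dist (g s) (x s)" using ne by simp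
    ultimately obtain \<theta> where th: "\<theta> > 0" "\<forall>u\<in>{0..T}. dist u s < \<theta> \<longrightarrow> dist (dist (g u) (x u)) (dist (g s) (x s)) < dist (g s) (x s)"
      unfolding continuous_on_iff by blast
    obtain q where q: "q \<in> \<rat>" "max 0 (s - \<theta>) < q" "q < s"
      using Rats_dense_in_real[of "max 0 (s - \<theta>)" s] s0 th by auto
    have qT: "q \<in> {0..T}" using q sT by auto
    have "dist q s < \<theta>" using q by (auto simp: dist_real_def)
    then have "dist (dist (g q) (x q)) (dist (g s) (x s)) < dist (g s) (x s)" using th qT by blast
    then have "g q \<noteq> x q" by (auto simp: dist_real_def)
    then show ?thesis using q qT s by (intro bexI[of _ q]) auto
  qed
  then obtain q where q: "q \<in> \<rat>" "q \<in> {0..T}" "q = 0 \<or> q < \<tau>" "g q \<noteq> x q" by blast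
  define d where "d = dist (g q) (x q)"
  have d0: "0 < d" using q by (simp add: d_def)
  obtain k :: nat where k: "inverse (real (Suc k)) < d / 4"
    using reals_Archimedean d0 by (metis zero_less_divide_iff zero_less_numeral)
  have k': "4 / real (Suc k) < d" using k by (simp add: field_simps)
  obtain c where c: "c \<in> D" "dist (g q) c < 1 / real (Suc k)" using D[of "1 / real (Suc k)" "g q"] by auto
  have "d \<le> dist (g q) c + dist c (x q)" unfolding d_def by (rule dist_triangle)
  moreover have "4 / real (Suc k) = 4 * (1 / real (Suc k))" "2 / real (Suc k) = 2 * (1 / real (Suc k))" by simp_all
  moreover have "0 < 1 / real (Suc k)" by simp
  ultimately have "2 / real (Suc k) \<le> dist (x q) c" using c k' by (simp only: dist_commute)
  then show ?thesis using q c by blast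
qed

lemma sfs:
  assumes "prob_space M" "subalgebra M G"
  shows "sigma_finite_subalgebra M G"
  using assms
  by (intro finite_measure_subalgebra_is_sigma_finite)
     (simp add: finite_measure_subalgebra_def finite_measure_subalgebra_axioms_def prob_space_def)

lemma cond_int:
  assumes P: "prob_space M" and sf: "sigma_finite_subalgebra M G"
    and rc: "regular_cond_dist M G X N Q" and B: "B \<in> sets N" and A: "A \<in> sets G"
    and Xm: "X \<in> measurable M N"
  shows "(\<integral>\<omega>. indicator A \<omega> * measure (Q \<omega>) B \<partial>M) = measure M (A \<inter> (X -` B \<inter> space M))"
    and "integrable M (\<lambda>\<omega>. indicator A \<omega> * measure (Q \<omega>) B)"
proof -
  interpret prob_space M by (rule P)
  interpret sigma_finite_subalgebra M G by (rule sf)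
  define E where "E = X -` B \<inter> space M"
  have EM: "E \<in> sets M" unfolding E_def using Xm B by (rule measurable_sets)
  have AM: "A \<in> sets M" using A subalg by (auto simp: subalgebra_def)
  have fi: "integrable M (indicator E :: 'a \<Rightarrow> real)"
    using EM by (intro integrable_real_indicator) (auto simp: less_top[symmetric])
  have meas: "(\<lambda>\<omega>. measure (Q \<omega>) B) \<in> borel_measurable G"
    and ae: "AE \<omega> in M. measure (Q \<omega>) B = real_cond_exp M G (indicator E) \<omega>"
    using rc B unfolding regular_cond_dist_def E_def by auto
  have measM: "(\<lambda>\<omega>. measure (Q \<omega>) B) \<in> borel_measurable M"
    by (rule measurable_from_subalg[OF subalg meas])
  have bnd: "AE \<omega> in M. norm (measure (Q \<omega>) B) \<le> 1"
  proof (rule AE_I2)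
    fix \<omega> assume "\<omega> \<in> space M"
    then have "prob_space (Q \<omega>)" using rc by (auto simp: regular_cond_dist_def)
    then show "norm (measure (Q \<omega>) B) \<le> 1" by (simp add: prob_space.prob_le_1)
  qed
  have iQ: "integrable M (\<lambda>\<omega>. measure (Q \<omega>) B)"
    by (rule integrable_const_bound[OF bnd measM])
  show "integrable M (\<lambda>\<omega>. indicator A \<omega> * measure (Q \<omega>) B)"
    using integrable_mult_indicator[OF AM iQ] by simp
  have "(\<integral>\<omega>. indicator A \<omega> * measure (Q \<omega>) B \<partial>M) = (\<integral>\<omega>. indicator A \<omega> * real_cond_exp M G (indicator E) \<omega> \<partial>M)"
    using ae AM measM by (intro integral_cong_AE) auto
  also have "\<dots> = (\<integral>\<omega>\<in>A. real_cond_exp M G (indicator E) \<omega> \<partial>M)"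
    by (simp add: set_lebesgue_integral_def)
  also have "\<dots> = (\<integral>\<omega>\<in>A. indicator E \<omega> \<partial>M)"
    by (rule real_cond_exp_intA[OF fi A, symmetric])
  also have "\<dots> = (\<integral>\<omega>. indicator (A \<inter> E) \<omega> \<partial>M)"
    by (simp add: set_lebesgue_integral_def indicator_inter_arith)
  also have "\<dots> = measure M (A \<inter> E)"
    using AM EM by (simp add: Int_absorb2 sets.sets_into_space Int_assoc)
  finally show "(\<integral>\<omega>. indicator A \<omega> * measure (Q \<omega>) B \<partial>M) = measure M (A \<inter> (X -` B \<inter> space M))"
    by (simp add: E_def)
qed

lemma zero_on:
  fixes f :: "'a \<Rightarrow> real"
  assumes "integrable M f" "AE \<omega> in M. 0 \<le> f \<omega>" "A \<in> sets M"
    "(\<integral>\<omega>. indicator A \<omega> * f \<omega> \<partial>M) = 0"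
  shows "AE \<omega> in M. \<omega> \<in> A \<longrightarrow> f \<omega> = 0"
proof -
  have i: "integrable M (\<lambda>\<omega>. indicator A \<omega> * f \<omega>)"
    using integrable_mult_indicator[OF assms(3) assms(1)] by simp
  have "AE \<omega> in M. 0 \<le> indicator A \<omega> * f \<omega>"
    using assms(2) by eventually_elim (simp add: indicator_def)
  then have "AE \<omega> in M. indicator A \<omega> * f \<omega> = 0"
    using integral_nonneg_eq_0_iff_AE[OF i] assms(4) by simp
  then show ?thesis by eventually_elim (simp add: indicator_def)
qed

theorem corollary1:
  fixes M :: "'a measure" and F :: "real \<Rightarrow> 'a measure" and T :: real
    and Dom :: "(real ^ 'n) set" and S :: "real \<Rightarrow> 'a \<Rightarrow> real ^ 'n"
    and \<tau> :: "'a \<Rightarrow> real" and Q :: "'a \<Rightarrow> (real \<Rightarrow> real ^ 'n) measure"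
  assumes "T > 0"
    and "prob_space M"
    and "filtration (space M) F"
    and "\<And>t. subalgebra M (F t)"
    and "usual_conditions M F T"
    and "\<forall>A\<in>sets (F 0). measure M A = 0 \<or> measure M A = 1"
    and "open Dom"
    and "\<forall>\<omega>\<in>space M. continuous_on {0..T} (\<lambda>t. S t \<omega>) \<and> (\<forall>t\<in>{0..T}. S t \<omega> \<in> Dom)"
    and "\<forall>t\<in>{0..T}. (\<lambda>\<omega>. S t \<omega>) \<in> borel_measurable (F t)"
    and "path_of T S \<in> measurable M (borel_of_top (mtopology_of (path_space T Dom)))"
    and "cond_full_support M F T Dom S"
    and "stopping_time F \<tau>"
    and "\<forall>\<omega>\<in>space M. \<tau> \<omega> \<in> {0..T}"
    and "regular_cond_dist M (filtration.pre_sigma (space M) F \<tau>) (path_of T S)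
           (borel_of_top (mtopology_of (path_space T Dom))) Q"
  shows "AE \<omega> in M. supp_of (mtopology_of (path_space T Dom)) (Q \<omega>) =
           {g \<in> mspace (path_space T Dom). \<forall>s\<in>{0..\<tau> \<omega>}. g s = S s \<omega>}"
proof -
  let ?m = "path_space T Dom"
  let ?X = "mtopology_of (path_space T Dom)"
  let ?N = "borel_of_top (mtopology_of (path_space T Dom))"
  let ?P = "path_of T S"
  let ?G = "filtration.pre_sigma (space M) F \<tau>"
  have T0: "0 < T" by fact
  have PM: "prob_space M" by fact
  interpret prob_space M by fact
  interpret filt: filtration "space M" F by fact
  have stop: "stopping_time F \<tau>" by fact
  have tauT: "\<forall>\<omega>\<in>space M. \<tau> \<omega> \<in> {0..T}" by fact
  have Fsub: "\<And>t. subalgebra M (F t)" by fact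
  have rc: "regular_cond_dist M ?G ?P ?N Q" by fact
  have cfs: "cond_full_support M F T Dom S" by fact
  have Pm: "?P \<in> measurable M ?N" by fact
  have Sc: "\<forall>\<omega>\<in>space M. continuous_on {0..T} (\<lambda>t. S t \<omega>) \<and> (\<forall>t\<in>{0..T}. S t \<omega> \<in> Dom)" by fact
  have Sm: "\<forall>t\<in>{0..T}. (\<lambda>\<omega>. S t \<omega>) \<in> borel_measurable (F t)" by fact
  have Dom: "open Dom" by fact

  have open_sets: "U \<in> sets ?N" if "openin ?X U" for U
  proof -
    have "{U. openin ?X U} \<subseteq> Pow (topspace ?X)" using openin_subset[of ?X] by blast
    then show ?thesis unfolding borel_of_top_def using that
      by (subst sets_measure_of) (auto intro: sigma_sets.Basic)
  qed
  have Gsp: "space ?G = space M" by (rule filt.space_pre_sigma)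
  have Gsets: "sets ?G \<subseteq> sets M"
  proof
    fix A assume A: "A \<in> sets ?G"
    have "{\<omega>\<in>A. \<tau> \<omega> \<le> T} \<in> sets (F T)" by (rule filt.sets_pre_sigmaD[OF stop A])
    moreover have "{\<omega>\<in>A. \<tau> \<omega> \<le> T} = A" using sets.sets_into_space[OF A] Gsp tauT by auto
    moreover have "sets (F T) \<subseteq> sets M" using Fsub[of T] by (simp add: subalgebra_def)
    ultimately show "A \<in> sets M" by auto
  qed
  have subG: "subalgebra M ?G" using Gsp Gsets by (simp add: subalgebra_def)
  have sfG: "sigma_finite_subalgebra M ?G" by (rule sfs[OF PM subG])

  obtain D :: "(real^'n) set" where Dc: "countable D" and D0: "\<And>X. open X \<Longrightarrow> X \<noteq> {} \<Longrightarrow> \<exists>d\<in>D. d \<in> X"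
    using countable_dense_setE by blast
  have D: "\<exists>d\<in>D. dist x d < e" if e0: "0 < e" for x :: "real^'n" and e :: real
  proof -
    obtain d where "d \<in> D" "d \<in> ball x e" using D0[of "ball x e"] e0 by auto
    then show ?thesis by auto
  qed

  define Ds where "Ds q c k = {\<omega>\<in>space M. q \<in> {0..T} \<and> (q = 0 \<or> q < \<tau> \<omega>) \<and> 2 / real (Suc k) \<le> dist (S q \<omega>) c}"
    for q c and k :: nat
  have Ds_G: "Ds q c k \<in> sets ?G" for q c k
  proof (rule filt.sets_pre_sigmaI[OF stop])
    fix t
    show "{\<omega> \<in> Ds q c k. \<tau> \<omega> \<le> t} \<in> sets (F t)"
    proof (cases "q \<in> {0..T} \<and> q \<le> t")
      case False
      have "{\<omega> \<in> Ds q c k. \<tau> \<omega> \<le> t} = {}"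
      proof (rule ccontr)
        assume "{\<omega> \<in> Ds q c k. \<tau> \<omega> \<le> t} \<noteq> {}"
        then obtain \<omega> where w: "\<omega> \<in> space M" "q \<in> {0..T}" "q = 0 \<or> q < \<tau> \<omega>" "\<tau> \<omega> \<le> t"
          by (auto simp: Ds_def)
        then show False using False tauT by auto
      qed
      then show ?thesis by (metis sets.empty_sets)
    next
      case True
      have e1: "{\<omega>\<in>space M. q < \<tau> \<omega>} \<in> sets (F q)"
        using stopping_timeD2[OF stop, of q] filt.space_F[of q] by (simp add: Measurable.pred_def)
      have Sq[measurable]: "(\<lambda>\<omega>. S q \<omega>) \<in> borel_measurable (F q)" using Sm True by auto
      have "Measurable.pred (F q) (\<lambda>\<omega>. 2 / real (Suc k) \<le> dist (S q \<omega>) c)" by measurable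
      then have e2: "{\<omega>\<in>space M. 2 / real (Suc k) \<le> dist (S q \<omega>) c} \<in> sets (F q)"
        using filt.space_F[of q] by (simp add: Measurable.pred_def)
      have e3: "{\<omega>\<in>space M. \<tau> \<omega> \<le> t} \<in> sets (F t)"
        using stopping_timeD[OF stop, of t] filt.space_F[of t] by (simp add: Measurable.pred_def)
      have mono: "sets (F q) \<subseteq> sets (F t)" by (rule filt.sets_F_mono) (use True in auto)
      have e0: "space M \<in> sets (F t)" using filt.space_F[of t] sets.top[of "F t"] by simp
      have eq: "{\<omega> \<in> Ds q c k. \<tau> \<omega> \<le> t} = (if q = 0 then space M else {\<omega>\<in>space M. q < \<tau> \<omega>}) \<inter>
          {\<omega>\<in>space M. 2 / real (Suc k) \<le> dist (S q \<omega>) c} \<inter> {\<omega>\<in>space M. \<tau> \<omega> \<le> t}"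
        using True by (auto simp: Ds_def)
      have i1: "(if q = 0 then space M else {\<omega>\<in>space M. q < \<tau> \<omega>}) \<in> sets (F t)"
        using e0 e1 mono by auto
      have i2: "{\<omega>\<in>space M. 2 / real (Suc k) \<le> dist (S q \<omega>) c} \<in> sets (F t)"
        using e2 mono by blast
      show ?thesis unfolding eq by (intro sets.Int i1 i2 e3)
    qed
  qed
  have AE1i: "AE \<omega> in M. \<omega> \<in> Ds q c k \<longrightarrow> measure (Q \<omega>) (Vset T Dom q c (1 / real (Suc k))) = 0"
    for q c k
  proof -
    let ?V = "Vset T Dom q c (1 / real (Suc k))"
    have VN: "?V \<in> sets ?N" by (rule open_sets[OF Vset_open])
    have empty: "Ds q c k \<inter> (?P -` ?V \<inter> space M) = {}"
    proof (rule ccontr)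
      assume "Ds q c k \<inter> (?P -` ?V \<inter> space M) \<noteq> {}"
      then obtain \<omega> where w: "\<omega> \<in> Ds q c k" "?P \<omega> \<in> ?V" by auto
      then have q: "q \<in> {0..T}" and d: "2 / real (Suc k) \<le> dist (S q \<omega>) c" by (auto simp: Ds_def)
      have "?P \<omega> q = S q \<omega>" using q by (simp add: path_of_def)
      then have "dist (S q \<omega>) c < 1 / real (Suc k)" using w(2) by (simp add: Vset_def)
      moreover have "1 / real (Suc k) \<le> 2 / real (Suc k)" by (simp add: divide_right_mono)
      ultimately show False using d by linarith
    qed
    have "(\<integral>\<omega>. indicator (Ds q c k) \<omega> * measure (Q \<omega>) ?V \<partial>M) = 0"
      using cond_int(1)[OF PM sfG rc VN Ds_G Pm] empty by simp
    moreover have "integrable M (\<lambda>\<omega>. indicator (Ds q c k) \<omega> * measure (Q \<omega>) ?V)"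
      by (rule cond_int(2)[OF PM sfG rc VN Ds_G Pm])
    ultimately have "AE \<omega> in M. indicator (Ds q c k) \<omega> * measure (Q \<omega>) ?V = 0"
      by (subst integral_nonneg_eq_0_iff_AE[symmetric]) auto
    then show ?thesis by eventually_elim (simp add: indicator_def)
  qed
  have cnt1: "countable (\<rat> \<times> D \<times> (UNIV :: nat set))" using Dc by (auto intro!: countable_SIGMA countable_rat)
  have AE1: "AE \<omega> in M. \<forall>p\<in>\<rat> \<times> D \<times> (UNIV :: nat set). \<omega> \<in> Ds (fst p) (fst (snd p)) (snd (snd p)) \<longrightarrow>
      measure (Q \<omega>) (Vset T Dom (fst p) (fst (snd p)) (1 / real (Suc (snd (snd p))))) = 0"
    using AE1i by (subst AE_ball_countable[OF cnt1]) auto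

  let ?TS = "(\<rat> \<inter> {0..T}) \<union> {T}"
  have AE2i: "AE \<omega> in M. (\<omega> \<in> space M \<and> measure (Q \<omega>) W = 0 \<and> \<tau> \<omega> \<le> t) \<longrightarrow>
      \<not> (\<exists>g\<in>W. \<forall>s\<in>{0..t}. g s = S s \<omega>)"
    if W: "openin ?X W" and t: "t \<in> {0..T}" for W t
  proof -
    have WN: "W \<in> sets ?N" by (rule open_sets[OF W])
    define C where "C = {\<omega>\<in>space M. measure (Q \<omega>) W = 0}"
    have measW: "(\<lambda>\<omega>. measure (Q \<omega>) W) \<in> borel_measurable ?G"
      using rc WN by (auto simp: regular_cond_dist_def)
    have "(\<lambda>\<omega>. measure (Q \<omega>) W) -` {0} \<inter> space ?G \<in> sets ?G"
      by (rule measurable_sets[OF measW]) simp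
    moreover have "(\<lambda>\<omega>. measure (Q \<omega>) W) -` {0} \<inter> space ?G = C" using Gsp by (auto simp: C_def)
    ultimately have CG: "C \<in> sets ?G" by simp
    have "(\<lambda>\<omega>. indicator C \<omega> * measure (Q \<omega>) W) = (\<lambda>_. 0)"
      by (auto simp: C_def indicator_def)
    then have m0: "measure M (C \<inter> (?P -` W \<inter> space M)) = 0"
      using cond_int(1)[OF PM sfG rc WN CG Pm] by simp
    define Ct where "Ct = {\<omega>\<in>C. \<tau> \<omega> \<le> t}"
    have CtF: "Ct \<in> sets (F t)" unfolding Ct_def by (rule filt.sets_pre_sigmaD[OF stop CG])
    have CtM: "Ct \<in> sets M" using CtF Fsub[of t] by (auto simp: subalgebra_def)
    define E where "E = {\<omega> \<in> space M. ?P \<omega> \<in> W}"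
    have E_eq: "E = ?P -` W \<inter> space M" by (auto simp: E_def)
    have EM: "E \<in> sets M" unfolding E_eq using Pm WN by (rule measurable_sets)
    have CM: "C \<in> sets M" using CG Gsets by auto
    have sfF: "sigma_finite_subalgebra M (F t)" by (rule sfs[OF PM Fsub])
    have fi: "integrable M (indicator E :: 'a \<Rightarrow> real)"
      using EM by (intro integrable_real_indicator) (auto simp: less_top[symmetric])
    have "(\<integral>\<omega>. indicator Ct \<omega> * (indicator E \<omega> :: real) \<partial>M) = measure M (Ct \<inter> E)"
      using CtM EM by (simp add: indicator_inter_arith[symmetric] Int_absorb2 sets.sets_into_space Int_assoc)
    also have "\<dots> \<le> measure M (C \<inter> (?P -` W \<inter> space M))"
      using CM EM by (intro finite_measure_mono) (auto simp: Ct_def E_eq)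
    finally have le0: "(\<integral>\<omega>. indicator Ct \<omega> * (indicator E \<omega> :: real) \<partial>M) \<le> 0" using m0 by simp
    have ge0: "(\<integral>\<omega>. indicator Ct \<omega> * (indicator E \<omega> :: real) \<partial>M) \<ge> 0"
      by (intro integral_nonneg_AE) (auto simp: indicator_def)
    have "(\<integral>\<omega>\<in>Ct. indicator E \<omega> \<partial>M) = (\<integral>\<omega>\<in>Ct. real_cond_exp M (F t) (indicator E) \<omega> \<partial>M)"
      by (rule sigma_finite_subalgebra.real_cond_exp_intA[OF sfF fi CtF])
    then have int0: "(\<integral>\<omega>. indicator Ct \<omega> * real_cond_exp M (F t) (indicator E) \<omega> \<partial>M) = 0"
      using le0 ge0 by (simp add: set_lebesgue_integral_def)
    have Z: "AE \<omega> in M. \<omega> \<in> Ct \<longrightarrow> real_cond_exp M (F t) (indicator E) \<omega> = 0"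
    proof (rule zero_on[OF _ _ CtM int0])
      show "integrable M (real_cond_exp M (F t) (indicator E))"
        by (rule sigma_finite_subalgebra.real_cond_exp_int(1)[OF sfF fi])
      show "AE \<omega> in M. 0 \<le> real_cond_exp M (F t) (indicator E) \<omega>"
        using EM by (intro sigma_finite_subalgebra.real_cond_exp_pos[OF sfF]) (auto simp: indicator_def)
    qed
    have CF: "AE \<omega> in M. (\<exists>g\<in>W. \<forall>s\<in>{0..t}. g s = S s \<omega>) \<longrightarrow> real_cond_exp M (F t) (indicator E) \<omega> > 0"
      using cfs t W unfolding cond_full_support_def E_def by blast
    show ?thesis using Z CF by eventually_elim (auto simp: Ct_def C_def)
  qed
  define Ws where "Ws p = Wset T Dom (fst p) (fst (snd p)) (1 / real (Suc (snd (snd p))))"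
    for p :: "nat \<times> (real^'n) list \<times> nat"
  have cnt2: "countable ((UNIV :: nat set) \<times> lists D \<times> (UNIV :: nat set))" using Dc by (auto intro!: countable_SIGMA)
  have cnt3: "countable ?TS" using countable_rat by (intro countable_Un countable_Int1) auto
  have AE2: "AE \<omega> in M. \<forall>p\<in>(UNIV :: nat set) \<times> lists D \<times> (UNIV :: nat set). \<forall>t\<in>?TS.
      (\<omega> \<in> space M \<and> measure (Q \<omega>) (Ws p) = 0 \<and> \<tau> \<omega> \<le> t) \<longrightarrow> \<not> (\<exists>g\<in>Ws p. \<forall>s\<in>{0..t}. g s = S s \<omega>)"
  proof (subst AE_ball_countable[OF cnt2], intro ballI, subst AE_ball_countable[OF cnt3], intro ballI)
    fix p t assume t: "t \<in> ?TS"
    have "openin ?X (Ws p)" unfolding Ws_def by (rule Wset_open) (use T0 in simp)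
    moreover have "t \<in> {0..T}" using t T0 by auto
    ultimately show "AE \<omega> in M. (\<omega> \<in> space M \<and> measure (Q \<omega>) (Ws p) = 0 \<and> \<tau> \<omega> \<le> t) \<longrightarrow>
        \<not> (\<exists>g\<in>Ws p. \<forall>s\<in>{0..t}. g s = S s \<omega>)" by (rule AE2i)
  qed

  have AEsp: "AE \<omega> in M. \<omega> \<in> space M" by (rule AE_I2)
  show ?thesis using AE1 AE2 AEsp
  proof eventually_elim
    case (elim \<omega>)
    note h1 = elim(1) and h2 = elim(2) and w = elim(3)
    have Qw: "prob_space (Q \<omega>)" and Qs: "sets (Q \<omega>) = sets ?N"
      using rc w by (auto simp: regular_cond_dist_def)
    have fmQ: "finite_measure (Q \<omega>)" using Qw by (simp add: prob_space_def)
    have emeq: "emeasure (Q \<omega>) U = ennreal (measure (Q \<omega>) U)" for U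
      by (rule finite_measure.emeasure_eq_measure[OF fmQ])
    have Scw: "continuous_on {0..T} (\<lambda>t. S t \<omega>)" "\<forall>t\<in>{0..T}. S t \<omega> \<in> Dom" using Sc w by auto
    have tw: "\<tau> \<omega> \<in> {0..T}" using tauT w by auto
    show "supp_of ?X (Q \<omega>) = {g \<in> mspace ?m. \<forall>s\<in>{0..\<tau> \<omega>}. g s = S s \<omega>}"
    proof (intro equalityI subsetI)
      fix g assume g: "g \<in> supp_of ?X (Q \<omega>)"
      then have gm: "g \<in> mspace ?m"
        and pos: "\<And>U. openin ?X U \<Longrightarrow> g \<in> U \<Longrightarrow> emeasure (Q \<omega>) U > 0"
        by (auto simp: supp_of_def)
      have "\<forall>s\<in>{0..\<tau> \<omega>}. g s = S s \<omega>"
      proof (rule ccontr)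
        assume "\<not> (\<forall>s\<in>{0..\<tau> \<omega>}. g s = S s \<omega>)"
        then obtain s where s: "s \<in> {0..\<tau> \<omega>}" "g s \<noteq> S s \<omega>" by auto
        obtain q c k where q: "q \<in> \<rat>" "c \<in> D" "q \<in> {0..T}" "q = 0 \<or> q < \<tau> \<omega>"
          "2 / real (Suc k) \<le> dist (S q \<omega>) c" "dist (g q) c < 1 / real (Suc k)"
          using separate_point[OF Scw(1) gm _ _ s(1) s(2) D] T0 tw by auto
        have "\<omega> \<in> Ds q c k" using w q by (simp add: Ds_def)
        moreover have "(q, c, k) \<in> \<rat> \<times> D \<times> (UNIV :: nat set)" using q(1,2) by simp
        ultimately have m0: "measure (Q \<omega>) (Vset T Dom q c (1 / real (Suc k))) = 0"
          using bspec[OF h1] by fastforce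
        have "g \<in> Vset T Dom q c (1 / real (Suc k))" using gm q by (simp add: Vset_def)
        then have "emeasure (Q \<omega>) (Vset T Dom q c (1 / real (Suc k))) > 0"
          by (rule pos[OF Vset_open])
        then show False using m0 emeq by simp
      qed
      then show "g \<in> {g \<in> mspace ?m. \<forall>s\<in>{0..\<tau> \<omega>}. g s = S s \<omega>}" using gm by simp
    next
      fix g assume g: "g \<in> {g \<in> mspace ?m. \<forall>s\<in>{0..\<tau> \<omega>}. g s = S s \<omega>}"
      then have gm: "g \<in> mspace ?m" and ag: "\<forall>s\<in>{0..\<tau> \<omega>}. g s = S s \<omega>" by auto
      show "g \<in> supp_of ?X (Q \<omega>)" unfolding supp_of_def
      proof (intro CollectI conjI allI impI)
        show "g \<in> topspace ?X" using gm by simp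
        fix U assume U: "openin ?X U \<and> g \<in> U"
        obtain r where r: "r > 0" "\<forall>y\<in>mspace ?m. mdist ?m g y < r \<longrightarrow> y \<in> U"
          using U unfolding openin_path by blast
        obtain N cs k where W: "cs \<in> lists D" "g \<in> Wset T Dom N cs (1 / real (Suc k))"
          "\<forall>h\<in>Wset T Dom N cs (1 / real (Suc k)). mdist ?m g h < r"
          using W_dense[OF T0 gm r(1) D] by blast
        let ?W = "Wset T Dom N cs (1 / real (Suc k))"
        have WWs: "?W = Ws (N, cs, k)" by (simp add: Ws_def)
        have Wo: "openin ?X ?W" by (rule Wset_open) (use T0 in simp)
        then obtain \<rho> where rho: "\<rho> > 0" "\<forall>y\<in>mspace ?m. mdist ?m g y < \<rho> \<longrightarrow> y \<in> ?W"
          using W(2) unfolding openin_path by blast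
        obtain t h where t: "t \<in> ?TS" "\<tau> \<omega> \<le> t" and h: "h \<in> mspace ?m" "mdist ?m g h < \<rho>"
          "\<forall>s\<in>{0..t}. h s = S s \<omega>"
          using extend_path[OF T0 Dom Scw(1) Scw(2) tw gm ag rho(1)] by blast
        have hW: "h \<in> ?W" using rho h by blast
        have "\<not> (\<omega> \<in> space M \<and> measure (Q \<omega>) ?W = 0 \<and> \<tau> \<omega> \<le> t)"
          using h2 W(1) t(1) hW h(3) unfolding WWs by blast
        then have "measure (Q \<omega>) ?W \<noteq> 0" using w t by blast
        then have mpos: "measure (Q \<omega>) ?W > 0" using measure_nonneg[of "Q \<omega>" ?W] by linarith
        have WU: "?W \<subseteq> U"
        proof
          fix y assume y: "y \<in> ?W"
          then have "y \<in> mspace ?m" by (simp add: Wset_def)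
          then show "y \<in> U" using r W(3) y by blast
        qed
        have "emeasure (Q \<omega>) ?W \<le> emeasure (Q \<omega>) U"
          using WU U open_sets Qs by (intro emeasure_mono) auto
        moreover have "emeasure (Q \<omega>) ?W > 0" using mpos emeq by simp
        ultimately show "emeasure (Q \<omega>) U > 0" by (rule order.strict_trans2[rotated])
      qed
    qed
  qed
qed

end
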